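(* Let $P_n$ be a random school choice problem of size $n$, let $\epsilon\in(0,1)$ and $L>0$ be constants, and let $I_0\subseteq I$ and $S_1\subseteq S$ be fixed (deterministic) subsets with $|I_0|\ge \epsilon n$ and $|S_1|\ge\epsilon n$. Then the probability of the event that the students in $I_0$ together make at least $Ln$ applications during DA and no student in $I_0$ ever applies to any school in $S_1$ during DA is at most $(1-\epsilon)^{Ln}$.
   Context: A random school choice problem $P_n$ of size $n$ has a set $I$ of $n$ students and a set $S$ of $n$ schools, each with quota 1; each student's strict preference over $S$ and each school's strict priority over $I$ are uniformly random linear orders, all mutually independent. The student-proposing deferred acceptance (DA) algorithm: in each round every student not tentatively held applies to her most preferred school that has not yet rejected her; each school tentatively holds its highest-priority applicant and rejects the others; stop when a round has no new rejection. Student $i$ applies to school $s$ during DA if at some round she proposes to $s$; the number of applications a student makes is the number of schools she applies to. *)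

theory Defs
  imports Complex_Main "HOL-Library.FuncSet"
begin

text \<open>Students and schools are both the index set {0..<n}.
  A strict linear order on {0..<n} is represented by a bijection of {0..<n}
  (extensional, so that the set of all of them is finite).\<close>

definition lin_orders :: "nat \<Rightarrow> (nat \<Rightarrow> nat) set" where
  "lin_orders n = {f \<in> {0..<n} \<rightarrow>\<^sub>E {0..<n}. bij_betw f {0..<n} {0..<n}}"

text \<open>A school choice problem of size n: pref i k = the school ranked k-th
  (0 = most preferred) by student i; prio s j = rank of student j in school s's
  priority (0 = highest priority).\<close>

definition problems :: "nat \<Rightarrow> ((nat \<Rightarrow> nat \<Rightarrow> nat) \<times> (nat \<Rightarrow> nat \<Rightarrow> nat)) set" where
  "problems n = ({0..<n} \<rightarrow>\<^sub>E lin_orders n) \<times> ({0..<n} \<rightarrow>\<^sub>E lin_orders n)"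

text \<open>DA state: r i = number of times student i has been rejected, so she
  currently proposes to pref i (r i) (if r i < n).  One round: every student
  proposes to her current school (a tentatively held student re-proposing to
  the school holding her is equivalent to simply being held); each school keeps
  its highest-priority proposer and rejects the others.\<close>

definition da_step :: "nat \<Rightarrow> (nat \<Rightarrow> nat \<Rightarrow> nat) \<Rightarrow> (nat \<Rightarrow> nat \<Rightarrow> nat) \<Rightarrow> (nat \<Rightarrow> nat) \<Rightarrow> (nat \<Rightarrow> nat)" where
  "da_step n pref prio r = (\<lambda>i.
     if i < n \<and> r i < n \<and>
        (\<exists>j<n. r j < n \<and> pref j (r j) = pref i (r i) \<and>
               prio (pref i (r i)) j < prio (pref i (r i)) i)
     then Suc (r i) else r i)"

definition da_state :: "nat \<Rightarrow> (nat \<Rightarrow> nat \<Rightarrow> nat) \<Rightarrow> (nat \<Rightarrow> nat \<Rightarrow> nat) \<Rightarrow> nat \<Rightarrow> (nat \<Rightarrow> nat)" where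
  "da_state n pref prio t = (da_step n pref prio ^^ t) (\<lambda>_. 0)"

text \<open>Student i applies to school s during DA iff she proposes to s in some round
  (after termination the state is a fixed point, so rounds beyond are harmless).\<close>

definition applies :: "nat \<Rightarrow> (nat \<Rightarrow> nat \<Rightarrow> nat) \<Rightarrow> (nat \<Rightarrow> nat \<Rightarrow> nat) \<Rightarrow> nat \<Rightarrow> nat \<Rightarrow> bool" where
  "applies n pref prio i s \<longleftrightarrow>
     (\<exists>t. da_state n pref prio t i < n \<and> pref i (da_state n pref prio t i) = s)"

definition num_apps :: "nat \<Rightarrow> (nat \<Rightarrow> nat \<Rightarrow> nat) \<Rightarrow> (nat \<Rightarrow> nat \<Rightarrow> nat) \<Rightarrow> nat \<Rightarrow> nat" where
  "num_apps n pref prio i = card {s. applies n pref prio i s}"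

definition prob_problems :: "nat \<Rightarrow> ((nat \<Rightarrow> nat \<Rightarrow> nat) \<Rightarrow> (nat \<Rightarrow> nat \<Rightarrow> nat) \<Rightarrow> bool) \<Rightarrow> real" where
  "prob_problems n E =
     real (card {(pref, prio) \<in> problems n. E pref prio}) / real (card (problems n))"

end

theory Submission
  imports Defs
begin


lemma st_Suc: "da_state n p q (Suc t) = da_step n p q (da_state n p q t)"
  by (simp add: da_state_def)

lemma st_0: "da_state n p q 0 = (\<lambda>_. 0)"
  by (simp add: da_state_def)

lemma step_ge: "r i \<le> da_step n p q r i"
  by (simp add: da_step_def)

lemma step_le: "da_step n p q r i \<le> Suc (r i)"
  by (simp add: da_step_def)

lemma st_mono: "s \<le> t \<Longrightarrow> da_state n p q s i \<le> da_state n p q t i"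
  using lift_Suc_mono_le[of "\<lambda>t. da_state n p q t i"] step_ge st_Suc by metis

lemma st_le_n: "da_state n p q t i \<le> n"
proof (induction t)
  case 0 then show ?case by (simp add: st_0)
next
  case (Suc t) then show ?case by (auto simp: st_Suc da_step_def)
qed

lemma st_ivt: "k \<le> da_state n p q t i \<Longrightarrow> \<exists>t'\<le>t. da_state n p q t' i = k"
proof (induction t)
  case 0 then show ?case by (simp add: st_0)
next
  case (Suc t)
  show ?case
  proof (cases "k \<le> da_state n p q t i")
    case True with Suc.IH show ?thesis using le_SucI by blast
  next
    case False
    with Suc.prems step_le[of n p q "da_state n p q t" i] have "da_state n p q (Suc t) i = k"
      by (simp add: st_Suc)
    then show ?thesis by blast
  qed
qed

lemma step_cong: "(\<And>j. j < n \<Longrightarrow> r j < n \<Longrightarrow> p' j (r j) = p j (r j)) \<Longrightarrow> da_step n p' q r = da_step n p q r"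
  unfolding da_step_def by (rule ext) (smt (verit))

lemma det:
  assumes "\<And>j s. j < n \<Longrightarrow> s < t \<Longrightarrow> da_state n p q s j < n \<Longrightarrow> p' j (da_state n p q s j) = p j (da_state n p q s j)"
  shows "s \<le> t \<Longrightarrow> da_state n p' q s = da_state n p q s"
proof (induction s)
  case 0 then show ?case by (simp add: st_0)
next
  case (Suc s)
  then have "da_state n p' q s = da_state n p q s" by simp
  then show ?case using Suc.prems
    by (simp add: st_Suc) (rule step_cong, rule assms, auto)
qed



definition sw :: "nat \<Rightarrow> nat \<Rightarrow> nat \<Rightarrow> nat" where
  "sw v w y = (if y = v then w else if y = w then v else y)"

lemma sw_sw[simp]: "sw v w (sw v w y) = y" by (simp add: sw_def)
lemma sw_inj: "sw v w a = sw v w b \<longleftrightarrow> a = b" by (metis sw_sw)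
lemma sw_bij: "v < n \<Longrightarrow> w < n \<Longrightarrow> bij_betw (sw v w) {0..<n} {0..<n}"
  by (rule bij_betw_byWitness[where f'="sw v w"]) (auto simp: sw_def)

lemma lin_orders_finite: "finite (lin_orders n)"
  unfolding lin_orders_def by (rule finite_subset[of _ "{0..<n} \<rightarrow>\<^sub>E {0..<n}"]) (auto intro: finite_PiE)

definition cylB where "cylB n \<pi>0 k v = {\<pi>\<in>lin_orders n. (\<forall>k'<k. \<pi> k' = \<pi>0 k') \<and> \<pi> k = v}"

lemma cylB_le:
  assumes "k < n" "v < n" "w < n" "v \<notin> \<pi>0 ` {..<k}" "w \<notin> \<pi>0 ` {..<k}"
  shows "card (cylB n \<pi>0 k v) \<le> card (cylB n \<pi>0 k w)"
proof -
  define f where "f \<pi> = restrict (sw v w \<circ> \<pi>) {0..<n}" for \<pi>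
  have "inj_on f (cylB n \<pi>0 k v)"
  proof (rule inj_onI)
    fix a b assume a: "a \<in> cylB n \<pi>0 k v" and b: "b \<in> cylB n \<pi>0 k v" and e: "f a = f b"
    show "a = b"
    proof (rule ext)
      fix y show "a y = b y"
      proof (cases "y < n")
        case True then show ?thesis using fun_cong[OF e, of y] by (simp add: f_def sw_inj)
      next
        case False then show ?thesis using a b by (auto simp: cylB_def lin_orders_def PiE_def extensional_def)
      qed
    qed
  qed
  moreover have "f ` cylB n \<pi>0 k v \<subseteq> cylB n \<pi>0 k w"
  proof
    fix x assume "x \<in> f ` cylB n \<pi>0 k v"
    then obtain \<pi> where \<pi>: "\<pi> \<in> cylB n \<pi>0 k v" and x: "x = f \<pi>" by blast
    have bij: "bij_betw \<pi> {0..<n} {0..<n}" and pi: "\<pi> \<in> {0..<n} \<rightarrow>\<^sub>E {0..<n}"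
      using \<pi> by (auto simp: cylB_def lin_orders_def)
    have "bij_betw (sw v w \<circ> \<pi>) {0..<n} {0..<n}"
      using bij sw_bij[OF assms(2,3)] by (rule bij_betw_trans)
    then have b2: "bij_betw x {0..<n} {0..<n}"
      unfolding x f_def by (rule bij_betw_cong[THEN iffD1, rotated]) simp
    have x1: "x \<in> {0..<n} \<rightarrow>\<^sub>E {0..<n}"
      using pi assms(2,3) by (auto simp: x f_def sw_def PiE_iff)
    have "\<forall>k'<k. x k' = \<pi>0 k'"
    proof (intro allI impI)
      fix k' assume "k' < k"
      then have "\<pi> k' = \<pi>0 k'" using \<pi> by (simp add: cylB_def)
      then show "x k' = \<pi>0 k'" using assms \<open>k'<k\<close> by (auto simp: x f_def sw_def)
    qed
    moreover have "x k = w" using \<pi> assms(1) by (simp add: x f_def sw_def cylB_def)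
    ultimately show "x \<in> cylB n \<pi>0 k w" using b2 x1 by (simp add: cylB_def lin_orders_def)
  qed
  moreover have "finite (cylB n \<pi>0 k w)"
    using lin_orders_finite by (simp add: cylB_def)
  ultimately show ?thesis by (rule card_inj_on_le)
qed



lemma cyl_bound:
  fixes eps :: real
  assumes p0: "\<pi>0 \<in> lin_orders n" and kn: "k < n" and av: "\<forall>k'<k. \<pi>0 k' \<notin> S1"
    and S1: "S1 \<subseteq> {0..<n}" and es: "eps * real n \<le> real (card S1)" and e0: "0 \<le> eps"
  shows "real (card {\<pi>\<in>lin_orders n. (\<forall>k'<k. \<pi> k' = \<pi>0 k') \<and> \<pi> k \<notin> S1})
     \<le> (1-eps) * real (card {\<pi>\<in>lin_orders n. \<forall>k'<k. \<pi> k' = \<pi>0 k'})"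
proof -
  define V where "V = \<pi>0 ` {..<k}"
  define R where "R = {0..<n} - V"
  define B where "B v = cylB n \<pi>0 k v" for v
  have bij0: "bij_betw \<pi>0 {0..<n} {0..<n}" using p0 by (simp add: lin_orders_def)
  have injk: "inj_on \<pi>0 {..<k}"
    by (rule inj_on_subset[OF bij_betw_imp_inj_on[OF bij0]]) (use kn in auto)
  have cV: "card V = k" unfolding V_def using card_image[OF injk] by simp
  have Vsub: "V \<subseteq> {0..<n}" using bij0 kn unfolding V_def bij_betw_def by auto
  have cR: "card R = n - k" unfolding R_def using card_Diff_subset[OF finite_subset[OF Vsub] Vsub] cV by simp
  have S1R: "S1 \<subseteq> R" using av S1 by (auto simp: R_def V_def)
  have fR: "finite R" by (simp add: R_def)
  obtain w0 where w0: "w0 \<in> R" using cR kn by (metis card.empty diff_is_0_eq ex_in_conv not_less)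
  define N where "N = card (B w0)"
  have cB: "card (B v) = N" if "v \<in> R" for v
    using cylB_le[of k n v w0 \<pi>0] cylB_le[of k n w0 v \<pi>0] that w0 kn
    unfolding N_def B_def R_def V_def by fastforce
  have fB: "finite (B v)" for v using lin_orders_finite by (simp add: B_def cylB_def)
  have disj: "\<forall>v\<in>A. \<forall>w\<in>A. v \<noteq> w \<longrightarrow> B v \<inter> B w = {}" for A
    by (auto simp: B_def cylB_def)
  have memR: "\<pi> k \<in> R" if "\<pi> \<in> lin_orders n" "\<forall>k'<k. \<pi> k' = \<pi>0 k'" for \<pi>
  proof -
    have bi: "bij_betw \<pi> {0..<n} {0..<n}" using that by (simp add: lin_orders_def)
    have "\<pi> k \<in> {0..<n}" using bi kn by (auto simp: bij_betw_def)
    moreover have "\<pi> k \<notin> V"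
    proof
      assume "\<pi> k \<in> V"
      then obtain k' where "k' < k" "\<pi> k = \<pi>0 k'" by (auto simp: V_def)
      then have "\<pi> k = \<pi> k'" using that by simp
      with bij_betw_imp_inj_on[OF bi] kn \<open>k'<k\<close> show False by (auto dest: inj_onD)
    qed
    ultimately show ?thesis by (simp add: R_def)
  qed
  have e1: "{\<pi>\<in>lin_orders n. \<forall>k'<k. \<pi> k' = \<pi>0 k'} = (\<Union>v\<in>R. B v)"
    using memR by (auto simp: B_def cylB_def)
  have e2: "{\<pi>\<in>lin_orders n. (\<forall>k'<k. \<pi> k' = \<pi>0 k') \<and> \<pi> k \<notin> S1} = (\<Union>v\<in>R-S1. B v)"
    using memR by (auto simp: B_def cylB_def)
  have c1: "card (\<Union>v\<in>R. B v) = card R * N"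
    by (subst card_UN_disjoint) (use fR fB disj cB in auto)
  have c2: "card (\<Union>v\<in>R-S1. B v) = card (R - S1) * N"
    by (subst card_UN_disjoint) (use fR fB cB in \<open>auto simp: B_def cylB_def\<close>)
  have cRS: "card (R - S1) = n - k - card S1"
    using card_Diff_subset[OF finite_subset[OF S1R fR] S1R] cR by simp
  have sle: "card S1 \<le> n - k" using card_mono[OF fR S1R] cR by simp
  have "real (n - k - card S1) \<le> (1 - eps) * real (n - k)"
  proof -
    have "eps * real (n-k) \<le> eps * real n" using e0 by (intro mult_left_mono) auto
    then show ?thesis using sle es kn by (simp add: of_nat_diff algebra_simps)
  qed
  then have "real (n - k - card S1) * real N \<le> (1 - eps) * real (n - k) * real N"
    by (intro mult_right_mono) auto
  then show ?thesis unfolding e1 e2 c1 c2 cRS cR by (simp only: of_nat_mult mult.commute mult.left_commute)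
qed



definition rr where "rr n x t = da_state n (fst x) (snd x) t"
definition qq where "qq n x t j = (case t of 0 \<Rightarrow> 0 | Suc t' \<Rightarrow> min (Suc (rr n x t' j)) n)"
definition cls where "cls n t x = {y\<in>problems n. snd y = snd x \<and> (\<forall>j<n. \<forall>k<qq n x t j. fst y j k = fst x j k)}"
definition okk where "okk I0 S1 n t x = (\<forall>i\<in>I0. \<forall>k<qq n x t i. fst x i k \<notin> S1)"
definition MM where "MM I0 S1 (c::real) n t x = c ^ (\<Sum>i\<in>I0. qq n x t i) * (if okk I0 S1 n t x then 1 else 0)"

lemma cls_rr: assumes "y \<in> cls n t x" "s \<le> t" shows "rr n y s = rr n x s"
proof -
  have sn: "snd y = snd x" using assms by (simp add: cls_def)
  have "da_state n (fst y) (snd x) s = da_state n (fst x) (snd x) s"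
  proof (rule det[OF _ assms(2)])
    fix j s' assume j: "j < n" and s': "s' < t" and lt: "da_state n (fst x) (snd x) s' j < n"
    obtain t' where t: "t = Suc t'" using s' by (cases t) auto
    have "da_state n (fst x) (snd x) s' j \<le> da_state n (fst x) (snd x) t' j"
      using s' t by (intro st_mono) simp
    then have "da_state n (fst x) (snd x) s' j < qq n x t j"
      using lt by (simp add: qq_def t rr_def)
    then show "fst y j (da_state n (fst x) (snd x) s' j) = fst x j (da_state n (fst x) (snd x) s' j)"
      using assms(1) j by (simp add: cls_def)
  qed
  then show ?thesis by (simp add: rr_def sn)
qed

lemma cls_qq: assumes "y \<in> cls n t x" shows "qq n y t = qq n x t" "qq n y (Suc t) = qq n x (Suc t)"
proof -
  show "qq n y (Suc t) = qq n x (Suc t)" using cls_rr[OF assms le_refl] by (intro ext) (simp add: qq_def)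
  show "qq n y t = qq n x t"
    by (cases t) (use cls_rr[OF assms] in \<open>auto intro!: ext simp: qq_def\<close>)
qed

lemma cls_same: assumes "y \<in> cls n t x" shows "cls n t y = cls n t x"
  using assms cls_qq[OF assms] unfolding cls_def by auto

lemma cls_self: "x \<in> problems n \<Longrightarrow> x \<in> cls n t x"
  by (simp add: cls_def)

lemma rr_ge: "rr n x t j \<le> rr n x (Suc t) j"
  unfolding rr_def st_Suc by (rule step_ge)
lemma rr_le: "rr n x (Suc t) j \<le> Suc (rr n x t j)"
  unfolding rr_def st_Suc by (rule step_le)
lemma rr_0: "rr n x 0 j = 0" by (simp add: rr_def st_0)

lemma qq_mono: "qq n x t j \<le> qq n x (Suc t) j"
proof (cases t)
  case (Suc t') then show ?thesis using rr_ge[of n x t' j] by (simp add: qq_def)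
qed (simp add: qq_def)

lemma qq_step: "qq n x (Suc t) j \<le> Suc (qq n x t j)"
proof (cases t)
  case (Suc t') then show ?thesis using rr_le[of n x t' j] by (simp add: qq_def)
qed (simp add: qq_def rr_0)

lemma qq_le: "qq n x t j \<le> n"
  by (cases t) (auto simp: qq_def)

lemma avg:
  fixes f :: "'a \<Rightarrow> real"
  assumes fin: "finite \<Omega>" and self: "\<And>x. x \<in> \<Omega> \<Longrightarrow> x \<in> C x" and sub: "\<And>x. x \<in> \<Omega> \<Longrightarrow> C x \<subseteq> \<Omega>"
    and same: "\<And>x y. x \<in> \<Omega> \<Longrightarrow> y \<in> C x \<Longrightarrow> C y = C x"
  shows "(\<Sum>x\<in>\<Omega>. f x) = (\<Sum>x\<in>\<Omega>. (\<Sum>y\<in>C x. f y) / card (C x))"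
proof -
  have "(\<Sum>x\<in>\<Omega>. (\<Sum>y\<in>C x. f y) / card (C x)) = (\<Sum>x\<in>\<Omega>. \<Sum>y\<in>\<Omega>. if y \<in> C x then f y / card (C y) else 0)"
  proof (rule sum.cong[OF refl])
    fix x assume x: "x \<in> \<Omega>"
    have "(\<Sum>y\<in>C x. f y) / card (C x) = (\<Sum>y\<in>C x. f y / card (C y))"
      by (simp add: sum_divide_distrib same[OF x])
    also have "\<dots> = (\<Sum>y\<in>\<Omega>. if y \<in> C x then f y / card (C y) else 0)"
      using sub[OF x] fin by (simp add: sum.If_cases Int_absorb1)
    finally show "(\<Sum>y\<in>C x. f y) / card (C x) = (\<Sum>y\<in>\<Omega>. if y \<in> C x then f y / card (C y) else 0)" .
  qed
  also have "\<dots> = (\<Sum>y\<in>\<Omega>. \<Sum>x\<in>\<Omega>. if y \<in> C x then f y / card (C y) else 0)"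
    by (rule sum.swap)
  also have "\<dots> = (\<Sum>y\<in>\<Omega>. f y)"
  proof (rule sum.cong[OF refl])
    fix y assume y: "y \<in> \<Omega>"
    have eq: "{x\<in>\<Omega>. y \<in> C x} = C y"
    proof
      show "{x\<in>\<Omega>. y \<in> C x} \<subseteq> C y" using same self by auto
      show "C y \<subseteq> {x\<in>\<Omega>. y \<in> C x}"
      proof
        fix x assume "x \<in> C y"
        then have "x \<in> \<Omega>" "C x = C y" using sub[OF y] same[OF y] by auto
        then show "x \<in> {x\<in>\<Omega>. y \<in> C x}" using self[OF y] by auto
      qed
    qed
    have fC: "finite (C y)" using sub[OF y] fin finite_subset by blast
    have ne: "card (C y) \<noteq> 0" using self[OF y] fC by auto
    have "(\<Sum>x\<in>\<Omega>. if y \<in> C x then f y / card (C y) else 0) = (\<Sum>x\<in>{x\<in>\<Omega>. y \<in> C x}. f y / card (C y))"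
      by (rule sum.inter_filter[symmetric, OF fin])
    also have "\<dots> = f y" using eq ne by simp
    finally show "(\<Sum>x\<in>\<Omega>. if y \<in> C x then f y / card (C y) else 0) = f y" .
  qed
  finally show ?thesis by simp
qed



lemma cls_PiE:
  assumes "x \<in> problems n"
  shows "cls n t x = (PiE {0..<n} (\<lambda>j. {\<pi>\<in>lin_orders n. \<forall>k<qq n x t j. \<pi> k = fst x j k})) \<times> {snd x}"
  using assms unfolding cls_def problems_def by (auto simp: PiE_iff)

lemma G_PiE:
  assumes "x \<in> problems n" "J \<subseteq> {0..<n}"
  shows "{y\<in>cls n t x. \<forall>i\<in>J. fst y i (qq n x t i) \<notin> S1} =
     (PiE {0..<n} (\<lambda>j. if j \<in> J then {\<pi>\<in>lin_orders n. (\<forall>k<qq n x t j. \<pi> k = fst x j k) \<and> \<pi> (qq n x t j) \<notin> S1}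
        else {\<pi>\<in>lin_orders n. \<forall>k<qq n x t j. \<pi> k = fst x j k})) \<times> {snd x}"
  using assms unfolding cls_PiE[OF assms(1)] by (auto simp: PiE_iff split: if_splits; (metis atLeastLessThan_iff le0)?)

lemma G_card:
  fixes eps :: real
  assumes x: "x \<in> problems n" and J: "J \<subseteq> {0..<n}"
    and Jq: "\<And>i. i \<in> J \<Longrightarrow> qq n x t i < n"
    and Jav: "\<And>i k. i \<in> J \<Longrightarrow> k < qq n x t i \<Longrightarrow> fst x i k \<notin> S1"
    and S1: "S1 \<subseteq> {0..<n}" and es: "eps * real n \<le> real (card S1)" and e0: "0 \<le> eps" and e1: "eps \<le> 1"
  shows "real (card {y\<in>cls n t x. \<forall>i\<in>J. fst y i (qq n x t i) \<notin> S1}) \<le> (1-eps) ^ card J * real (card (cls n t x))"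
proof -
  define Cy where "Cy j = {\<pi>\<in>lin_orders n. \<forall>k<qq n x t j. \<pi> k = fst x j k}" for j
  define Cy' where "Cy' j = (if j \<in> J then {\<pi>\<in>lin_orders n. (\<forall>k<qq n x t j. \<pi> k = fst x j k) \<and> \<pi> (qq n x t j) \<notin> S1} else Cy j)" for j
  have c1: "card (cls n t x) = (\<Prod>j\<in>{0..<n}. card (Cy j))"
    unfolding cls_PiE[OF x] Cy_def by (simp add: card_cartesian_product card_PiE)
  have c2: "card {y\<in>cls n t x. \<forall>i\<in>J. fst y i (qq n x t i) \<notin> S1} = (\<Prod>j\<in>{0..<n}. card (Cy' j))"
    unfolding G_PiE[OF x J] Cy'_def Cy_def by (simp add: card_cartesian_product card_PiE)
  have each: "real (card (Cy' j)) \<le> (if j \<in> J then 1 - eps else 1) * real (card (Cy j))" if j: "j \<in> {0..<n}" for j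
  proof (cases "j \<in> J")
    case True
    have "fst x j \<in> lin_orders n" using x j by (auto simp: problems_def PiE_iff)
    from cyl_bound[OF this Jq[OF True] _ S1 es e0] Jav[OF True]
    show ?thesis using True by (simp add: Cy'_def Cy_def)
  qed (simp add: Cy'_def)
  have "real (\<Prod>j\<in>{0..<n}. card (Cy' j)) \<le> (\<Prod>j\<in>{0..<n}. (if j \<in> J then 1 - eps else 1) * real (card (Cy j)))"
    unfolding of_nat_prod by (rule prod_mono) (use each in auto)
  also have "\<dots> = (\<Prod>j\<in>{0..<n}. (if j \<in> J then 1 - eps else 1)) * (\<Prod>j\<in>{0..<n}. real (card (Cy j)))"
    by (rule prod.distrib)
  also have "(\<Prod>j\<in>{0..<n}. (if j \<in> J then 1 - eps else 1)) = (1 - eps) ^ card J"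
    using J by (simp add: prod.If_cases Int_absorb1 Int_def[symmetric])
  finally show ?thesis unfolding c1 c2 by simp
qed



lemma problems_finite: "finite (problems n)"
  unfolding problems_def using lin_orders_finite by (auto intro!: finite_PiE)

lemma MM_step:
  fixes eps :: real
  assumes x: "x \<in> problems n" and I0: "I0 \<subseteq> {0..<n}"
    and S1: "S1 \<subseteq> {0..<n}" and es: "eps * real n \<le> real (card S1)" and e0: "0 \<le> eps" and e1: "eps < 1"
    and c: "c = 1 / (1 - eps)"
  shows "(\<Sum>y\<in>cls n t x. MM I0 S1 c n (Suc t) y) \<le> (\<Sum>y\<in>cls n t x. MM I0 S1 c n t y)"
proof -
  define Q where "Q = qq n x t"
  define Q' where "Q' = qq n x (Suc t)"
  define J where "J = {i\<in>I0. Q' i \<noteq> Q i}"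
  define G where "G = {y\<in>cls n t x. \<forall>i\<in>J. fst y i (qq n x t i) \<notin> S1}"
  have cpos: "c > 0" using c e1 by simp
  have fcls: "finite (cls n t x)" using problems_finite by (rule finite_subset[rotated]) (auto simp: cls_def)
  have qy: "qq n y t = Q" "qq n y (Suc t) = Q'" if "y \<in> cls n t x" for y
    using cls_qq[OF that] by (auto simp: Q_def Q'_def)
  have agree: "fst y i k = fst x i k" if "y \<in> cls n t x" "i \<in> I0" "k < Q i" for y i k
    using that I0 by (auto simp: cls_def Q_def)
  have okeq: "okk I0 S1 n t y = okk I0 S1 n t x" if "y \<in> cls n t x" for y
    using qy[OF that] agree[OF that] by (auto simp: okk_def Q_def)
  have MMeq: "MM I0 S1 c n t y = MM I0 S1 c n t x" if "y \<in> cls n t x" for y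
    using qy[OF that] okeq[OF that] by (simp add: MM_def Q_def)
  have RHS: "(\<Sum>y\<in>cls n t x. MM I0 S1 c n t y) = real (card (cls n t x)) * MM I0 S1 c n t x"
    using MMeq by simp
  have QQ: "Q i \<le> Q' i" "Q' i \<le> Suc (Q i)" "Q' i \<le> n" for i
    using qq_mono qq_step qq_le by (auto simp: Q_def Q'_def)
  show ?thesis
  proof (cases "okk I0 S1 n t x")
    case False
    have "MM I0 S1 c n (Suc t) y = 0" if "y \<in> cls n t x" for y
    proof -
      have "\<not> okk I0 S1 n (Suc t) y"
        using okeq[OF that] False qy[OF that] QQ by (auto simp: okk_def) (meson order_less_le_trans)
      then show ?thesis by (simp add: MM_def)
    qed
    then show ?thesis unfolding RHS using cpos by (simp add: MM_def)
  next
    case True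
    have okS: "okk I0 S1 n (Suc t) y \<longleftrightarrow> y \<in> G" if y: "y \<in> cls n t x" for y
    proof
      assume "okk I0 S1 n (Suc t) y"
      then have h: "\<forall>i\<in>I0. \<forall>k<Q' i. fst y i k \<notin> S1" using qy[OF y] by (simp add: okk_def)
      show "y \<in> G" unfolding G_def J_def Q_def[symmetric]
      proof (intro CollectI conjI ballI)
        fix i assume "i \<in> {i \<in> I0. Q' i \<noteq> Q i}"
        then have "i \<in> I0" "Q i < Q' i" using QQ[of i] by auto
        then show "fst y i (Q i) \<notin> S1" using h by blast
      qed (use y in auto)
    next
      assume "y \<in> G"
      then show "okk I0 S1 n (Suc t) y" unfolding okk_def
      proof (intro ballI allI impI)
        fix i k assume G: "y \<in> G" and i: "i \<in> I0" and k: "k < qq n y (Suc t) i"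
        show "fst y i k \<notin> S1"
        proof (cases "k < Q i")
          case True
          then show ?thesis using agree[OF y i True] \<open>okk I0 S1 n t x\<close> i by (auto simp: okk_def Q_def)
        next
          case False
          then have "k = Q i" "Q' i \<noteq> Q i" using k qy[OF y] QQ[of i] by auto
          then show ?thesis using G i by (auto simp: G_def J_def Q_def)
        qed
      qed
    qed
    have sumJ: "(\<Sum>i\<in>I0. Q' i) = (\<Sum>i\<in>I0. Q i) + card J"
    proof -
      have "(\<Sum>i\<in>I0. Q' i) = (\<Sum>i\<in>I0. Q i + (if i \<in> J then 1 else 0))"
        by (rule sum.cong) (use QQ in \<open>auto simp: J_def\<close>, metis QQ(1,2) le_Suc_eq le_antisym)
      also have "\<dots> = (\<Sum>i\<in>I0. Q i) + card J"
      proof -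
        have fI0: "finite I0" using I0 finite_subset by blast
        have "(\<Sum>i\<in>I0. (if i \<in> J then 1 else 0)::nat) = (\<Sum>i\<in>{i\<in>I0. i \<in> J}. 1)"
          by (rule sum.inter_filter[symmetric, OF fI0])
        also have "\<dots> = card J" by (simp add: J_def)
        finally show ?thesis by (simp add: sum.distrib)
      qed
      finally show ?thesis .
    qed
    have LHS: "(\<Sum>y\<in>cls n t x. MM I0 S1 c n (Suc t) y) = c ^ (\<Sum>i\<in>I0. Q' i) * real (card G)"
    proof -
      have "(\<Sum>y\<in>cls n t x. MM I0 S1 c n (Suc t) y) = (\<Sum>y\<in>cls n t x. c ^ (\<Sum>i\<in>I0. Q' i) * (if y \<in> G then 1 else 0))"
        by (rule sum.cong) (use qy okS in \<open>auto simp: MM_def\<close>)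
      also have "\<dots> = c ^ (\<Sum>i\<in>I0. Q' i) * real (card G)"
        using fcls by (simp add: sum_distrib_left[symmetric] sum.If_cases Int_absorb1 G_def Int_def)
      finally show ?thesis .
    qed
    have Gc: "real (card G) \<le> (1-eps) ^ card J * real (card (cls n t x))"
      unfolding G_def
    proof (rule G_card[OF x _ _ _ S1 es e0])
      show "J \<subseteq> {0..<n}" using I0 by (auto simp: J_def)
      show "qq n x t i < n" if "i \<in> J" for i using that QQ[of i] by (auto simp: J_def Q_def)
      show "fst x i k \<notin> S1" if "i \<in> J" "k < qq n x t i" for i k
        using that True by (auto simp: J_def okk_def)
      show "eps \<le> 1" using e1 by simp
    qed
    have "c ^ (\<Sum>i\<in>I0. Q' i) * real (card G) = c ^ (\<Sum>i\<in>I0. Q i) * (c ^ card J * real (card G))"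
      by (simp add: sumJ power_add)
    also have "\<dots> \<le> c ^ (\<Sum>i\<in>I0. Q i) * (c ^ card J * ((1-eps) ^ card J * real (card (cls n t x))))"
      using Gc cpos by (intro mult_left_mono) auto
    also have "\<dots> = c ^ (\<Sum>i\<in>I0. Q i) * real (card (cls n t x))"
      using c e1 by (simp add: power_mult_distrib[symmetric] mult.assoc[symmetric])
    also have "\<dots> = (\<Sum>y\<in>cls n t x. MM I0 S1 c n t y)"
      unfolding RHS using True by (simp add: MM_def Q_def)
    finally show ?thesis unfolding LHS .
  qed
qed



lemma MM_total:
  fixes eps :: real
  assumes I0: "I0 \<subseteq> {0..<n}"
    and S1: "S1 \<subseteq> {0..<n}" and es: "eps * real n \<le> real (card S1)" and e0: "0 \<le> eps" and e1: "eps < 1"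
    and c: "c = 1 / (1 - eps)"
  shows "(\<Sum>x\<in>problems n. MM I0 S1 c n t x) \<le> real (card (problems n))"
proof (induction t)
  case 0
  have "MM I0 S1 c n 0 x = 1" for x by (simp add: MM_def qq_def okk_def)
  then show ?case by simp
next
  case (Suc t)
  have av: "(\<Sum>x\<in>problems n. f x) = (\<Sum>x\<in>problems n. (\<Sum>y\<in>cls n t x. f y) / card (cls n t x))" for f
    by (rule avg[OF problems_finite]) (auto simp: cls_self cls_same, auto simp: cls_def)
  have "(\<Sum>x\<in>problems n. MM I0 S1 c n (Suc t) x) \<le> (\<Sum>x\<in>problems n. MM I0 S1 c n t x)"
    unfolding av[of "MM I0 S1 c n (Suc t)"] av[of "MM I0 S1 c n t"]
    by (intro sum_mono divide_right_mono MM_step[OF _ I0 S1 es e0 e1 c]) auto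
  then show ?case using Suc.IH by linarith
qed

lemma eventually_max:
  "eventually (\<lambda>T. \<forall>t. rr n x t i \<le> rr n x T i) sequentially"
proof -
  have fin: "finite (range (\<lambda>t. rr n x t i))"
    by (rule finite_subset[of _ "{0..n}"]) (auto simp: rr_def st_le_n)
  obtain t0 where t0: "rr n x t0 i = Max (range (\<lambda>t. rr n x t i))"
    using Max_in[OF fin] by auto
  show ?thesis unfolding eventually_sequentially
  proof (intro exI allI impI)
    fix T t assume "t0 \<le> T"
    have "rr n x t i \<le> rr n x t0 i" using t0 fin by simp
    also have "\<dots> \<le> rr n x T i" using \<open>t0 \<le> T\<close> by (simp add: rr_def st_mono)
    finally show "rr n x t i \<le> rr n x T i" .
  qed
qed



theorem lemma2:
  fixes n :: nat and \<epsilon> L :: real and I0 S1 :: "nat set"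
  assumes "0 < \<epsilon>" "\<epsilon> < 1" "0 < L"
    and "I0 \<subseteq> {0..<n}" "S1 \<subseteq> {0..<n}"
    and "real (card I0) \<ge> \<epsilon> * real n" "real (card S1) \<ge> \<epsilon> * real n"
  shows "prob_problems n (\<lambda>pref prio.
            real (\<Sum>i\<in>I0. num_apps n pref prio i) \<ge> L * real n \<and>
            (\<forall>i\<in>I0. \<forall>s\<in>S1. \<not> applies n pref prio i s))
         \<le> (1 - \<epsilon>) powr (L * real n)"
proof -
  define c where "c = 1 / (1 - \<epsilon>)"
  define \<Omega> where "\<Omega> = problems n"
  define P where "P x \<longleftrightarrow> real (\<Sum>i\<in>I0. num_apps n (fst x) (snd x) i) \<ge> L * real n \<and>
            (\<forall>i\<in>I0. \<forall>s\<in>S1. \<not> applies n (fst x) (snd x) i s)" for x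
  define E where "E = {x\<in>\<Omega>. P x}"
  have Eeq: "{(pref, prio) \<in> problems n. real (\<Sum>i\<in>I0. num_apps n pref prio i) \<ge> L * real n \<and>
            (\<forall>i\<in>I0. \<forall>s\<in>S1. \<not> applies n pref prio i s)} = E"
    by (auto simp: E_def P_def \<Omega>_def)
  have c1: "c \<ge> 1" using assms(1,2) by (simp add: c_def)
  have "eventually (\<lambda>T. \<forall>xi\<in>\<Omega> \<times> {0..<n}. \<forall>t. rr n (fst xi) t (snd xi) \<le> rr n (fst xi) T (snd xi)) sequentially"
    by (rule eventually_ball_finite) (auto simp: \<Omega>_def problems_finite eventually_max)
  then obtain T0 where T0: "\<And>x i t. x \<in> \<Omega> \<Longrightarrow> i < n \<Longrightarrow> rr n x t i \<le> rr n x T0 i"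
    unfolding eventually_sequentially by force
  define T where "T = Suc T0"
  have big: "c powr (L * real n) \<le> MM I0 S1 c n T x" if x: "x \<in> E" for x
  proof -
    have xO: "x \<in> \<Omega>" and Px: "P x" using x by (auto simp: E_def)
    have qT: "qq n x T i = min (Suc (rr n x T0 i)) n" for i by (simp add: qq_def T_def)
    have na: "num_apps n (fst x) (snd x) i \<le> qq n x T i" if i: "i \<in> I0" for i
    proof -
      have "{s. applies n (fst x) (snd x) i s} \<subseteq> fst x i ` {..<qq n x T i}"
      proof
        fix s assume "s \<in> {s. applies n (fst x) (snd x) i s}"
        then obtain t where t: "rr n x t i < n" "fst x i (rr n x t i) = s"
          by (auto simp: applies_def rr_def)
        have "rr n x t i \<le> rr n x T0 i" using T0[OF xO] i assms(4) by auto
        then have "rr n x t i < qq n x T i" using t qT by simp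
        then show "s \<in> fst x i ` {..<qq n x T i}" using t by blast
      qed
      then have "card {s. applies n (fst x) (snd x) i s} \<le> card (fst x i ` {..<qq n x T i})"
        by (intro card_mono) auto
      also have "\<dots> \<le> qq n x T i" using card_image_le[of "{..<qq n x T i}" "fst x i"] by simp
      finally show ?thesis by (simp add: num_apps_def)
    qed
    have ok: "okk I0 S1 n T x"
      unfolding okk_def
    proof (intro ballI allI impI)
      fix i k assume i: "i \<in> I0" and k: "k < qq n x T i"
      then have "k \<le> rr n x T0 i" "k < n" using qT by auto
      then obtain t' where "rr n x t' i = k" using st_ivt unfolding rr_def by blast
      then have "applies n (fst x) (snd x) i (fst x i k)" using \<open>k < n\<close>
        by (auto simp: applies_def rr_def)
      then show "fst x i k \<notin> S1" using Px i by (auto simp: P_def)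
    qed
    have "L * real n \<le> real (\<Sum>i\<in>I0. num_apps n (fst x) (snd x) i)" using Px by (simp add: P_def)
    also have "\<dots> \<le> real (\<Sum>i\<in>I0. qq n x T i)" using na by (simp add: sum_mono)
    finally have "c powr (L * real n) \<le> c powr real (\<Sum>i\<in>I0. qq n x T i)"
      using c1 by (intro powr_mono) auto
    also have "\<dots> = MM I0 S1 c n T x" using ok c1 powr_realpow[of c "\<Sum>i\<in>I0. qq n x T i"] by (simp add: MM_def del: of_nat_sum)
    finally show ?thesis .
  qed
  have fE: "finite E" using problems_finite by (simp add: E_def \<Omega>_def)
  have MMnn: "MM I0 S1 c n T x \<ge> 0" for x using c1 by (simp add: MM_def)
  have "real (card E) * c powr (L * real n) = (\<Sum>x\<in>E. c powr (L * real n))" by simp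
  also have "\<dots> \<le> (\<Sum>x\<in>E. MM I0 S1 c n T x)" using big by (rule sum_mono)
  also have "\<dots> \<le> (\<Sum>x\<in>\<Omega>. MM I0 S1 c n T x)"
    using MMnn problems_finite by (intro sum_mono2) (auto simp: E_def \<Omega>_def)
  also have "\<dots> \<le> real (card \<Omega>)"
    unfolding \<Omega>_def by (rule MM_total[OF assms(4,5,7)]) (use assms in \<open>auto simp: c_def\<close>)
  finally have key: "real (card E) * c powr (L * real n) \<le> real (card \<Omega>)" .
  have inv: "c powr (L * real n) * (1 - \<epsilon>) powr (L * real n) = 1"
    using assms(1,2) by (simp add: c_def powr_mult[symmetric] powr_divide)
  have cp: "c powr (L * real n) > 0" using c1 by simp
  show ?thesis
  proof (cases "card \<Omega> = 0")
    case True then show ?thesis by (simp add: prob_problems_def Eeq \<Omega>_def)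
  next
    case False
    have "real (card E) \<le> real (card \<Omega>) * (1 - \<epsilon>) powr (L * real n)"
    proof -
      have "real (card E) = real (card E) * c powr (L * real n) * (1 - \<epsilon>) powr (L * real n)"
        using inv by (simp add: mult.assoc)
      also have "\<dots> \<le> real (card \<Omega>) * (1 - \<epsilon>) powr (L * real n)"
        using key by (intro mult_right_mono) auto
      finally show ?thesis .
    qed
    then show ?thesis using False
      apply (unfold prob_problems_def Eeq)
      apply (unfold \<Omega>_def[symmetric])
      by (simp add: divide_le_eq mult.commute)
  qed
qed


end
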